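(* Let $b>1$. The reduced prolate system $(\ell_{23},G_{pro})$ on $M_h\cong S^2\times S^2$ ($2h=1$), where $G_{pro}=b\ell_{12}^2+b\ell_{13}^2+\ell_{14}^2$, is a generalised semi-toric system.
   Context: $\mathbf L=(\ell_{12},\ell_{13},\ell_{14},\ell_{23},\ell_{24},\ell_{34})\in\mathbb R^6\cong\mathfrak{so}(4)^*$ with the Lie–Poisson bracket of $\mathfrak{so}(4)$ (extending $\ell_{ji}=-\ell_{ij}$: $\{\ell_{ij},\ell_{jk}\}=-\ell_{ik}$ for distinct $i,j,k$, and $\{\ell_{ij},\ell_{kl}\}=0$ when $\{i,j\}\cap\{k,l\}=\emptyset$). $M_h=\{\mathbf L:\sum_{i<j}\ell_{ij}^2=2h,\ \ell_{12}\ell_{34}-\ell_{13}\ell_{24}+\ell_{14}\ell_{23}=0\}$. A (generalised) semi-toric system is a two-degree-of-freedom integrable system $(J,G)$ on a four-dimensional symplectic manifold in which $J$ generates a global (effective) Hamiltonian $S^1$-action and all singularities of the momentum map are of elliptic or focus-focus type (no hyperbolic components, no degenerate singularities). *)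

theory Defs
  imports "HOL-Analysis.Analysis"
begin

text \<open>Coordinates on so(4)* = R^6: index 1..6 of type 6 stand for
  l12, l13, l14, l23, l24, l34 (in this order).\<close>

definition pr6 :: "6 \<Rightarrow> nat \<times> nat" where
  "pr6 a = (if a = 1 then (1,2) else if a = 2 then (1,3) else if a = 3 then (1,4)
     else if a = 4 then (2,3) else if a = 5 then (2,4) else (3,4))"

definition idx6 :: "nat \<Rightarrow> nat \<Rightarrow> 6" where
  "idx6 i j = (if (i,j) = (1,2) then 1 else if (i,j) = (1,3) then 2
     else if (i,j) = (1,4) then 3 else if (i,j) = (2,3) then 4
     else if (i,j) = (2,4) then 5 else 6)"

definition ell :: "real^6 \<Rightarrow> nat \<Rightarrow> nat \<Rightarrow> real" where
  "ell L i j = (if i < j then L $ idx6 i j else if j < i then - (L $ idx6 j i) else 0)"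

definition kd :: "nat \<Rightarrow> nat \<Rightarrow> real" where
  "kd i j = (if i = j then 1 else 0)"

text \<open>Lie--Poisson tensor of so(4): {l_ij, l_kl} =
  -(d_jk l_il - d_ik l_jl - d_jl l_ik + d_il l_jk); this gives
  {l_ij, l_jk} = - l_ik and {l_ij, l_kl} = 0 for disjoint index pairs.\<close>
definition poisson_tensor :: "real^6 \<Rightarrow> 6 \<Rightarrow> 6 \<Rightarrow> real" where
  "poisson_tensor L a b = (let (i,j) = pr6 a; (k,l) = pr6 b in
     - (kd j k * ell L i l - kd i k * ell L j l - kd j l * ell L i k + kd i l * ell L j k))"

definition pd :: "(real^6 \<Rightarrow> real) \<Rightarrow> real^6 \<Rightarrow> 6 \<Rightarrow> real" where
  "pd f L b = frechet_derivative f (at L) (axis b 1)"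

definition pbr :: "(real^6 \<Rightarrow> real) \<Rightarrow> (real^6 \<Rightarrow> real) \<Rightarrow> real^6 \<Rightarrow> real" where
  "pbr f g L = (\<Sum>a\<in>UNIV. \<Sum>b\<in>UNIV. pd f L a * poisson_tensor L a b * pd g L b)"

definition hamvf :: "(real^6 \<Rightarrow> real) \<Rightarrow> real^6 \<Rightarrow> real^6" where
  "hamvf f L = (\<chi> a. \<Sum>b\<in>UNIV. poisson_tensor L a b * pd f L b)"

definition jacm :: "(real^6 \<Rightarrow> real^6) \<Rightarrow> real^6 \<Rightarrow> real^6^6" where
  "jacm F L = (\<chi> a b. frechet_derivative (\<lambda>x. F x $ a) (at L) (axis b 1))"

definition Mh :: "real \<Rightarrow> (real^6) set" where
  "Mh h = {L. (\<Sum>a\<in>UNIV. (L $ a)^2) = 2 * h \<and>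
              L$1 * L$6 - L$2 * L$5 + L$3 * L$4 = 0}"

text \<open>Tangent space of M_h at L (kernel of the differentials of the two Casimirs).\<close>
definition tanMh :: "real^6 \<Rightarrow> (real^6) set" where
  "tanMh L = {v. (\<Sum>a\<in>UNIV. L $ a * v $ a) = 0 \<and>
     v$1 * L$6 + L$1 * v$6 - v$2 * L$5 - L$2 * v$5 + v$3 * L$4 + L$3 * v$4 = 0}"

definition momentum_rank :: "(real^6 \<Rightarrow> real) \<Rightarrow> (real^6 \<Rightarrow> real) \<Rightarrow> real^6 \<Rightarrow> nat" where
  "momentum_rank J G L =
     dim ((\<lambda>v. (frechet_derivative J (at L) v, frechet_derivative G (at L) v)) ` tanMh L)"

definition cplx :: "real^6^6 \<Rightarrow> complex^6^6" where
  "cplx A = (\<chi> i j. complex_of_real (A $ i $ j))"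

definition eig_on_tan :: "real^6 \<Rightarrow> real^6^6 \<Rightarrow> complex \<Rightarrow> bool" where
  "eig_on_tan L A \<mu> \<longleftrightarrow> (\<exists>v::complex^6. v \<noteq> 0 \<and>
      (\<chi> i. Re (v $ i)) \<in> tanMh L \<and> (\<chi> i. Im (v $ i)) \<in> tanMh L \<and>
      cplx A *v v = \<mu> *s v)"

definition regular_on_tan :: "real^6 \<Rightarrow> real^6^6 \<Rightarrow> bool" where
  "regular_on_tan L B \<longleftrightarrow> (\<exists>m1 m2 m3 m4. distinct [m1, m2, m3, m4] \<and>
      eig_on_tan L B m1 \<and> eig_on_tan L B m2 \<and> eig_on_tan L B m3 \<and> eig_on_tan L B m4)"

definition indep_on_tan :: "real^6 \<Rightarrow> real^6^6 \<Rightarrow> real^6^6 \<Rightarrow> bool" where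
  "indep_on_tan L A B \<longleftrightarrow> (\<forall>c1 c2. (\<forall>v\<in>tanMh L. (c1 *\<^sub>R A + c2 *\<^sub>R B) *v v = 0)
      \<longrightarrow> c1 = 0 \<and> c2 = 0)"

text \<open>Non-degenerate rank-0 singularities: the linearisations span a Cartan subalgebra
  of sp(T_L M_h) (independent, containing a regular element); its Williamson type is read
  off the eigenvalues of a regular element.\<close>
definition elliptic_elliptic :: "(real^6 \<Rightarrow> real) \<Rightarrow> (real^6 \<Rightarrow> real) \<Rightarrow> real^6 \<Rightarrow> bool" where
  "elliptic_elliptic J G L \<longleftrightarrow> indep_on_tan L (jacm (hamvf J) L) (jacm (hamvf G) L) \<and>
     (\<exists>c1 c2. let B = c1 *\<^sub>R jacm (hamvf J) L + c2 *\<^sub>R jacm (hamvf G) L in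
        regular_on_tan L B \<and> (\<forall>\<mu>. eig_on_tan L B \<mu> \<longrightarrow> Re \<mu> = 0))"

definition focus_focus :: "(real^6 \<Rightarrow> real) \<Rightarrow> (real^6 \<Rightarrow> real) \<Rightarrow> real^6 \<Rightarrow> bool" where
  "focus_focus J G L \<longleftrightarrow> indep_on_tan L (jacm (hamvf J) L) (jacm (hamvf G) L) \<and>
     (\<exists>c1 c2. let B = c1 *\<^sub>R jacm (hamvf J) L + c2 *\<^sub>R jacm (hamvf G) L in
        regular_on_tan L B \<and> (\<forall>\<mu>. eig_on_tan L B \<mu> \<longrightarrow> Re \<mu> \<noteq> 0 \<and> Im \<mu> \<noteq> 0))"

text \<open>Non-degenerate transversally elliptic rank-1 singularity: for the combination
  f = c1 J + c2 G with df = 0 on T_L M_h, the linearisation of X_f has a non-zero purely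
  imaginary eigenvalue (its transversal part has eigenvalues +-i w, w non-zero).\<close>
definition transv_elliptic :: "(real^6 \<Rightarrow> real) \<Rightarrow> (real^6 \<Rightarrow> real) \<Rightarrow> real^6 \<Rightarrow> bool" where
  "transv_elliptic J G L \<longleftrightarrow> (\<exists>c1 c2. (c1, c2) \<noteq> (0, 0) \<and>
     (\<forall>v\<in>tanMh L. c1 * frechet_derivative J (at L) v + c2 * frechet_derivative G (at L) v = 0) \<and>
     (\<exists>\<mu>. eig_on_tan L (c1 *\<^sub>R jacm (hamvf J) L + c2 *\<^sub>R jacm (hamvf G) L) \<mu> \<and>
          Re \<mu> = 0 \<and> \<mu> \<noteq> 0))"

definition generates_S1 :: "(real^6) set \<Rightarrow> (real^6 \<Rightarrow> real) \<Rightarrow> bool" where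
  "generates_S1 M J \<longleftrightarrow> (\<exists>\<phi> :: real \<Rightarrow> real^6 \<Rightarrow> real^6.
     (\<forall>L\<in>M. \<phi> 0 L = L \<and> (\<forall>t. \<phi> t L \<in> M) \<and>
        (\<forall>t. ((\<lambda>s. \<phi> s L) has_vector_derivative hamvf J (\<phi> t L)) (at t)) \<and>
        (\<forall>t. \<phi> (t + 2 * pi) L = \<phi> t L)) \<and>
     (\<forall>t. 0 < t \<and> t < 2 * pi \<longrightarrow> (\<exists>L\<in>M. \<phi> t L \<noteq> L)))"

definition gen_semitoric :: "(real^6) set \<Rightarrow> (real^6 \<Rightarrow> real) \<Rightarrow> (real^6 \<Rightarrow> real) \<Rightarrow> bool" where
  "gen_semitoric M J G \<longleftrightarrow>
     (\<forall>L\<in>M. J differentiable (at L) \<and> G differentiable (at L) \<and>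
        hamvf J differentiable (at L) \<and> hamvf G differentiable (at L)) \<and>
     (\<forall>L\<in>M. pbr J G L = 0) \<and>
     M \<subseteq> closure {L\<in>M. momentum_rank J G L = 2} \<and>
     generates_S1 M J \<and>
     (\<forall>L\<in>M. momentum_rank J G L = 0 \<longrightarrow> elliptic_elliptic J G L \<or> focus_focus J G L) \<and>
     (\<forall>L\<in>M. momentum_rank J G L = 1 \<longrightarrow> transv_elliptic J G L)"

end

theory Submission
  imports Defs
begin

lemma exhaust_6: fixes x :: 6 shows "x = 1 \<or> x = 2 \<or> x = 3 \<or> x = 4 \<or> x = 5 \<or> x = 6"
proof (induct x)
  case (of_int z)
  then have "z = 0 \<or> z = 1 \<or> z = 2 \<or> z = 3 \<or> z = 4 \<or> z = 5" by fastforce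
  then show ?case by auto
qed
lemma UNIV_6: "(UNIV::6 set) = {1,2,3,4,5,6}" using exhaust_6 by auto
lemma sum_6: "sum f (UNIV::6 set) = f 1 + f 2 + f 3 + f 4 + f 5 + f 6"
  unfolding UNIV_6 by (simp add: ac_simps)
lemma forall_6: "(\<forall>i::6. P i) \<longleftrightarrow> P 1 \<and> P 2 \<and> P 3 \<and> P 4 \<and> P 5 \<and> P 6"
  by (metis exhaust_6)

definition v6 :: "real \<Rightarrow> real \<Rightarrow> real \<Rightarrow> real \<Rightarrow> real \<Rightarrow> real \<Rightarrow> real^6" where
  "v6 a b c d e f = (\<chi> i. if i = 1 then a else if i = 2 then b else if i = 3 then c
     else if i = 4 then d else if i = 5 then e else f)"
lemma v6_nth[simp]: "v6 a b c d e f $ 1 = a" "v6 a b c d e f $ 2 = b" "v6 a b c d e f $ 3 = c"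
  "v6 a b c d e f $ 4 = d" "v6 a b c d e f $ 5 = e" "v6 a b c d e f $ 6 = f"
  by (simp_all add: v6_def)
lemma vec6_eq_iff: "(x::'a^6) = y \<longleftrightarrow> x$1 = y$1 \<and> x$2 = y$2 \<and> x$3 = y$3 \<and> x$4 = y$4 \<and> x$5 = y$5 \<and> x$6 = y$6"
  by (simp add: vec_eq_iff forall_6)
lemma axis6[simp]: "axis (1::6) (1::real) = v6 1 0 0 0 0 0" "axis (2::6) (1::real) = v6 0 1 0 0 0 0"
  "axis (3::6) (1::real) = v6 0 0 1 0 0 0" "axis (4::6) (1::real) = v6 0 0 0 1 0 0"
  "axis (5::6) (1::real) = v6 0 0 0 0 1 0" "axis (6::6) (1::real) = v6 0 0 0 0 0 1"
  by (simp_all add: vec6_eq_iff axis_def)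

lemma hd_nth: "((\<lambda>x::real^6. x $ i) has_derivative (\<lambda>v. v $ i)) F"
  by (rule bounded_linear_imp_has_derivative[OF bounded_linear_vec_nth])

lemma hd_comp: assumes "(F has_derivative F') (at L)"
  shows "((\<lambda>x. F x $ a) has_derivative (\<lambda>v. F' v $ a)) (at L)"
  using bounded_linear.has_derivative[OF bounded_linear_vec_nth assms] .

lemma hd_vec6: fixes F :: "real^6 \<Rightarrow> real^6"
  assumes "\<And>a. ((\<lambda>x. F x $ a) has_derivative (\<lambda>v. F' v $ a)) (at L)"
  shows "(F has_derivative F') (at L)"
proof -
  have "\<forall>i\<in>Basis. ((\<lambda>x. F x \<bullet> i) has_derivative (\<lambda>x. F' x \<bullet> i)) (at L within UNIV)"
  proof (rule ballI)
    fix i :: "real^6" assume "i \<in> Basis"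
    then obtain a where i: "i = axis a 1" by (auto simp add: Basis_vec_def)
    show "((\<lambda>x. F x \<bullet> i) has_derivative (\<lambda>x. F' x \<bullet> i)) (at L within UNIV)"
      using assms[of a] unfolding i by (simp add: inner_axis)
  qed
  then have "(F has_derivative F') (at L within UNIV)"
    using has_derivative_componentwise_within by blast
  then show ?thesis by simp
qed

lemma jacm_mult: assumes "(F has_derivative F') (at L)"
  shows "jacm F L *v v = (\<chi> a. \<Sum>b\<in>UNIV. F' (axis b 1) $ a * v $ b)"
proof -
  have "frechet_derivative (\<lambda>x. F x $ a) (at L) = (\<lambda>v. F' v $ a)" for a
    using frechet_derivative_at[OF hd_comp[OF assms]] by simp
  then show ?thesis by (simp add: jacm_def matrix_vector_mult_def)
qed

lemma pt_tab:
  "poisson_tensor L 1 1 = 0"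
  "poisson_tensor L 1 2 = L$4"
  "poisson_tensor L 1 3 = L$5"
  "poisson_tensor L 1 4 = - L$2"
  "poisson_tensor L 1 5 = - L$3"
  "poisson_tensor L 1 6 = 0"
  "poisson_tensor L 2 1 = - L$4"
  "poisson_tensor L 2 2 = 0"
  "poisson_tensor L 2 3 = L$6"
  "poisson_tensor L 2 4 = L$1"
  "poisson_tensor L 2 5 = 0"
  "poisson_tensor L 2 6 = - L$3"
  "poisson_tensor L 3 1 = - L$5"
  "poisson_tensor L 3 2 = - L$6"
  "poisson_tensor L 3 3 = 0"
  "poisson_tensor L 3 4 = 0"
  "poisson_tensor L 3 5 = L$1"
  "poisson_tensor L 3 6 = L$2"
  "poisson_tensor L 4 1 = L$2"
  "poisson_tensor L 4 2 = - L$1"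
  "poisson_tensor L 4 3 = 0"
  "poisson_tensor L 4 4 = 0"
  "poisson_tensor L 4 5 = L$6"
  "poisson_tensor L 4 6 = - L$5"
  "poisson_tensor L 5 1 = L$3"
  "poisson_tensor L 5 2 = 0"
  "poisson_tensor L 5 3 = - L$1"
  "poisson_tensor L 5 4 = - L$6"
  "poisson_tensor L 5 5 = 0"
  "poisson_tensor L 5 6 = L$4"
  "poisson_tensor L 6 1 = 0"
  "poisson_tensor L 6 2 = L$3"
  "poisson_tensor L 6 3 = - L$2"
  "poisson_tensor L 6 4 = L$5"
  "poisson_tensor L 6 5 = - L$4"
  "poisson_tensor L 6 6 = 0"
  by (simp_all add: poisson_tensor_def pr6_def ell_def kd_def idx6_def)

abbreviation Jf :: "real^6 \<Rightarrow> real" where "Jf \<equiv> (\<lambda>L. L $ 4)"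
abbreviation Gb :: "real \<Rightarrow> real^6 \<Rightarrow> real" where
  "Gb b \<equiv> (\<lambda>L. b * (L $ 1)^2 + b * (L $ 2)^2 + (L $ 3)^2)"

lemma hdJ: "(Jf has_derivative (\<lambda>v. v $ 4)) (at L)" by (rule hd_nth)
lemma hsq: "((\<lambda>L::real^6. (L $ i)^2) has_derivative (\<lambda>v. 2 * L$i * v$i)) (at L)"
  apply (rule has_derivative_eq_rhs)
   apply (rule has_derivative_power[OF hd_nth])
  apply (rule ext) apply simp
  done
lemma hdG: "(Gb b has_derivative (\<lambda>v. 2*b*L$1 * v$1 + 2*b*L$2 * v$2 + 2*L$3 * v$3)) (at L)"
  apply (rule has_derivative_eq_rhs)
   apply (rule has_derivative_add has_derivative_mult_right hsq)+
  apply (rule ext)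
  apply (simp add: algebra_simps)
  done
lemma fdJ: "frechet_derivative Jf (at L) = (\<lambda>v. v $ 4)"
  using frechet_derivative_at[OF hdJ] by simp
lemma fdG: "frechet_derivative (Gb b) (at L) = (\<lambda>v. 2*b*L$1* v$1 + 2*b*L$2* v$2 + 2*L$3* v$3)"
  using frechet_derivative_at[OF hdG] by simp
lemma pdJ: "pd Jf L c = (axis c 1 :: real^6) $ 4" by (simp add: pd_def fdJ)
lemma pdG: "pd (Gb b) L c = (2*b*L$1*(axis c 1 :: real^6)$1 + 2*b*L$2*(axis c 1 :: real^6)$2 + 2*L$3*(axis c 1 :: real^6)$3)"
  by (simp add: pd_def fdG)

definition XJ :: "real^6 \<Rightarrow> real^6" where "XJ x = v6 (-x$2) (x$1) 0 0 (-x$6) (x$5)"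
definition XG :: "real \<Rightarrow> real^6 \<Rightarrow> real^6" where
  "XG b x = v6 (2*b*x$2*x$4 + 2*x$3*x$5) (-2*b*x$1*x$4 + 2*x$3*x$6) (-2*b*x$1*x$5 - 2*b*x$2*x$6) 0
     (2*(b-1)*x$1*x$3) (2*(b-1)*x$2*x$3)"
definition DXG :: "real \<Rightarrow> real^6 \<Rightarrow> real^6 \<Rightarrow> real^6" where
  "DXG b x v = v6 (2*b*(v$2*x$4 + x$2* v$4) + 2*(v$3*x$5 + x$3* v$5))
     (-2*b*(v$1*x$4 + x$1* v$4) + 2*(v$3*x$6 + x$3* v$6))
     (-2*b*(v$1*x$5 + x$1* v$5) - 2*b*(v$2*x$6 + x$2* v$6)) 0
     (2*(b-1)*(v$1*x$3 + x$1* v$3)) (2*(b-1)*(v$2*x$3 + x$2* v$3))"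

lemma hamvfJ: "hamvf Jf = XJ"
  by (rule ext) (simp add: hamvf_def XJ_def pdJ sum_6 pt_tab vec6_eq_iff)
lemma hamvfG: "hamvf (Gb b) = XG b"
  by (rule ext) (simp only: hamvf_def pdG, simp add: XG_def sum_6 pt_tab vec6_eq_iff algebra_simps)

lemma hdXJ: "(XJ has_derivative XJ) (at L)"
proof (rule hd_vec6)
  fix a :: 6
  have "a = 1 \<or> a = 2 \<or> a = 3 \<or> a = 4 \<or> a = 5 \<or> a = 6" by (rule exhaust_6)
  then show "((\<lambda>x. XJ x $ a) has_derivative (\<lambda>v. XJ v $ a)) (at L)"
    apply (elim disjE)
    apply (simp_all add: XJ_def)
    apply (rule has_derivative_minus hd_nth)+
    done
qed
lemma hdXG: "(XG b has_derivative DXG b L) (at L)"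
proof (rule hd_vec6)
  fix a :: 6
  have "a = 1 \<or> a = 2 \<or> a = 3 \<or> a = 4 \<or> a = 5 \<or> a = 6" by (rule exhaust_6)
  then show "((\<lambda>x. XG b x $ a) has_derivative (\<lambda>v. DXG b L v $ a)) (at L)"
    apply (elim disjE)
    apply (simp_all add: XG_def DXG_def)
    apply (rule has_derivative_eq_rhs, (rule has_derivative_add has_derivative_diff has_derivative_mult has_derivative_minus has_derivative_const hd_nth)+, rule ext, simp add: algebra_simps)+
    done
qed
lemma jacJ: "jacm (hamvf Jf) L *v v = XJ v"
  unfolding hamvfJ jacm_mult[OF hdXJ] by (simp add: vec6_eq_iff sum_6 XJ_def)
lemma jacG: "jacm (hamvf (Gb b)) L *v v = DXG b L v"
  unfolding hamvfG jacm_mult[OF hdXG] by (simp add: vec6_eq_iff sum_6 DXG_def algebra_simps)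
lemma pbr0: "pbr Jf (Gb b) L = 0"
  by (simp add: pbr_def sum_6 pdJ pdG pt_tab)

lemma alg_R1:
  fixes x1 x2 x3 x4 x5 x6 c1 c2 \<alpha> \<beta> b :: real
  assumes b: "b > 1" and c: "c1 \<noteq> 0 \<or> c2 \<noteq> 0"
    and pf: "x1*x6 - x2*x5 + x3*x4 = 0"
    and e1: "2*b*c2*x1 = \<alpha>*x1 + \<beta>*x6" and e2: "2*b*c2*x2 = \<alpha>*x2 - \<beta>*x5"
    and e3: "2*c2*x3 = \<alpha>*x3 + \<beta>*x4" and e4: "c1 = \<alpha>*x4 + \<beta>*x3"
    and e5: "0 = \<alpha>*x5 - \<beta>*x2" and e6: "0 = \<alpha>*x6 + \<beta>*x1"
  shows "(x1 = 0 \<and> x2 = 0 \<and> x3 = 0) \<or> (x3 = 0 \<and> x5 = 0 \<and> x6 = 0) \<or>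
         (x1 = 0 \<and> x2 = 0 \<and> x4 = 0 \<and> x5 = 0 \<and> x6 = 0)"
proof (cases "\<alpha> = 0")
  case True
  show ?thesis
  proof (cases "\<beta> = 0")
    case True
    with \<open>\<alpha> = 0\<close> e4 c have "c2 \<noteq> 0" by simp
    with b e1 e2 e3 \<open>\<alpha> = 0\<close> True show ?thesis by simp
  next
    case False
    with \<open>\<alpha> = 0\<close> e5 e6 have "x1 = 0" "x2 = 0" by simp_all
    with \<open>\<alpha> = 0\<close> False e1 e2 have "x5 = 0" "x6 = 0" by simp_all
    with \<open>x1 = 0\<close> \<open>x2 = 0\<close> pf have "x3 = 0 \<or> x4 = 0" by simp
    then show ?thesis using \<open>x1 = 0\<close> \<open>x2 = 0\<close> \<open>x5 = 0\<close> \<open>x6 = 0\<close> by auto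
  qed
next
  case False
  have x5: "x5 = \<beta>*x2/\<alpha>" and x6: "x6 = -\<beta>*x1/\<alpha>" using e5 e6 False by (simp_all add: field_simps)
  show ?thesis
  proof (cases "x1 = 0 \<and> x2 = 0")
    case True
    then have "x5 = 0" "x6 = 0" using x5 x6 by simp_all
    with True pf have "x3 = 0 \<or> x4 = 0" by simp
    then show ?thesis using True \<open>x5 = 0\<close> \<open>x6 = 0\<close> by auto
  next
    case nz: False
    have d1: "(2*b*c2*\<alpha> - \<alpha>^2 + \<beta>^2) * x1 = 0"
    proof -
      have "2*b*c2*\<alpha>*x1 = \<alpha>^2*x1 + \<beta>*(\<alpha>*x6)" using arg_cong[OF e1, of "\<lambda>t. \<alpha>*t"] by (simp add: power2_eq_square algebra_simps)
      also have "\<alpha>*x6 = -\<beta>*x1" using e6 by simp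
      finally show ?thesis by (simp add: power2_eq_square algebra_simps)
    qed
    have d2: "(2*b*c2*\<alpha> - \<alpha>^2 + \<beta>^2) * x2 = 0"
    proof -
      have "2*b*c2*\<alpha>*x2 = \<alpha>^2*x2 - \<beta>*(\<alpha>*x5)" using arg_cong[OF e2, of "\<lambda>t. \<alpha>*t"] by (simp add: power2_eq_square algebra_simps)
      also have "\<alpha>*x5 = \<beta>*x2" using e5 by simp
      finally show ?thesis by (simp add: power2_eq_square algebra_simps)
    qed
    have D: "2*b*c2*\<alpha> = \<alpha>^2 - \<beta>^2" using d1 d2 nz by auto
    define r where "r = x1^2 + x2^2"
    have r: "r > 0" using nz unfolding r_def by (simp add: sum_power2_gt_zero_iff)
    have p2: "\<alpha>*x3*x4 = \<beta>*r"
    proof -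
      have "\<alpha>*(x1*x6 - x2*x5 + x3*x4) = 0" using pf by simp
      then have "x1*(\<alpha>*x6) - x2*(\<alpha>*x5) + \<alpha>*x3*x4 = 0" by (simp add: algebra_simps)
      moreover have "\<alpha>*x6 = -\<beta>*x1" "\<alpha>*x5 = \<beta>*x2" using e5 e6 by simp_all
      ultimately have "x1*(-\<beta>*x1) - x2*(\<beta>*x2) + \<alpha>*x3*x4 = 0" by simp
      then show ?thesis unfolding r_def by (simp add: power2_eq_square algebra_simps)
    qed
    have key: "x3^2 * (\<alpha>^2*(1-b) - \<beta>^2) = b*\<beta>^2*r"
    proof -
      have "2*b*c2*\<alpha>*x3^2 = b*\<alpha>^2*x3^2 + b*\<beta>*(\<alpha>*x3*x4)"
        using arg_cong[OF e3, of "\<lambda>t. t*b*\<alpha>*x3"] by (simp add: power2_eq_square algebra_simps)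
      then have "(\<alpha>^2 - \<beta>^2)*x3^2 = b*\<alpha>^2*x3^2 + b*\<beta>*(\<beta>*r)" using D p2 by simp
      then show ?thesis by (simp add: power2_eq_square algebra_simps)
    qed
    have "x3^2 * (\<alpha>^2*(1-b) - \<beta>^2) \<le> 0"
    proof -
      have "\<alpha>^2*(1-b) \<le> 0" using b by (intro mult_nonneg_nonpos) auto
      then have "\<alpha>^2*(1-b) - \<beta>^2 \<le> 0" by (smt (verit) zero_le_power2)
      then show ?thesis by (intro mult_nonneg_nonpos) auto
    qed
    moreover have "b*\<beta>^2*r \<ge> 0" using b r by simp
    ultimately have "b*\<beta>^2*r = 0" using key by linarith
    then have "\<beta> = 0" using b r by simp
    then have "x3^2 * \<alpha>^2 * (1-b) = 0" using key by (simp add: algebra_simps)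
    then have "x3 = 0" using b False by simp
    then show ?thesis using x5 x6 \<open>\<beta> = 0\<close> by simp
  qed
qed

definition star :: "real^6 \<Rightarrow> real^6" where "star L = v6 (L$6) (-L$5) (L$4) (L$3) (-L$2) (L$1)"
lemma inner6: "inner (x::real^6) y = x$1*y$1 + x$2*y$2 + x$3*y$3 + x$4*y$4 + x$5*y$5 + x$6*y$6"
  by (simp add: inner_vec_def sum_6)
lemma tan_inner: "v \<in> tanMh L \<longleftrightarrow> inner L v = 0 \<and> inner (star L) v = 0"
  by (simp add: tanMh_def sum_6 inner6 star_def algebra_simps)
lemma Mh_iff: "L \<in> Mh (1/2) \<longleftrightarrow> (L$1)^2 + (L$2)^2 + (L$3)^2 + (L$4)^2 + (L$5)^2 + (L$6)^2 = 1 \<and>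
   L$1 * L$6 - L$2 * L$5 + L$3 * L$4 = 0"
  by (simp add: Mh_def sum_6 add.assoc)
lemma M_inner: assumes "L \<in> Mh (1/2)"
  shows "inner L L = 1" "inner (star L) L = 0" "inner (star L) (star L) = 1"
  using assms by (simp_all add: Mh_iff inner6 star_def power2_eq_square algebra_simps)

lemma perp_T: assumes M: "L \<in> Mh (1/2)" and h: "\<forall>v\<in>tanMh L. inner w v = 0"
  shows "w = inner w L *\<^sub>R L + inner w (star L) *\<^sub>R star L"
proof -
  define \<alpha> where "\<alpha> = inner w L"
  define \<beta> where "\<beta> = inner w (star L)"
  define v where "v = w - \<alpha> *\<^sub>R L - \<beta> *\<^sub>R star L"
  note MI = M_inner[OF M]
  have "inner L v = 0" unfolding v_def \<alpha>_def \<beta>_def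
    using MI by (simp add: inner_diff_right inner_commute)
  moreover have "inner (star L) v = 0" unfolding v_def \<alpha>_def \<beta>_def
    using MI by (simp add: inner_diff_right inner_commute)
  ultimately have vT: "v \<in> tanMh L" by (simp add: tan_inner)
  have "inner w v = inner v v + \<alpha> * inner L v + \<beta> * inner (star L) v"
    unfolding v_def by (simp add: inner_diff_left inner_diff_right inner_commute algebra_simps)
  then have "inner v v = 0" using h vT \<open>inner L v = 0\<close> \<open>inner (star L) v = 0\<close> by simp
  then have "v = 0" by simp
  then show ?thesis unfolding v_def \<alpha>_def \<beta>_def by (simp add: algebra_simps)
qed

abbreviation gradG :: "real \<Rightarrow> real^6 \<Rightarrow> real^6" where "gradG b L \<equiv> v6 (2*b*L$1) (2*b*L$2) (2*L$3) 0 0 0"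
lemma mr_eq: "momentum_rank Jf (Gb b) L = dim ((\<lambda>v. (inner (axis 4 1) v, inner (gradG b L) v)) ` tanMh L)"
  by (simp add: momentum_rank_def fdJ fdG inner6)

lemma R1: assumes b: "b > 1" and M: "L \<in> Mh (1/2)" and d: "momentum_rank Jf (Gb b) L < 2"
  shows "(L$1 = 0 \<and> L$2 = 0 \<and> L$3 = 0) \<or> (L$3 = 0 \<and> L$5 = 0 \<and> L$6 = 0) \<or>
         (L$1 = 0 \<and> L$2 = 0 \<and> L$4 = 0 \<and> L$5 = 0 \<and> L$6 = 0)"
proof -
  let ?f = "\<lambda>v. (inner (axis 4 1) v, inner (gradG b L) v)"
  have dl: "dim (?f ` tanMh L) < DIM(real \<times> real)" using d by (simp add: mr_eq)
  then obtain y where y: "y \<noteq> 0" "\<And>z. z \<in> span (?f ` tanMh L) \<Longrightarrow> orthogonal y z"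
    using orthogonal_to_subspace_exists[OF dl] by blast
  obtain c1 c2 where yc: "y = (c1, c2)" by (cases y)
  have c: "c1 \<noteq> 0 \<or> c2 \<noteq> 0" using y(1) yc by (auto simp: zero_prod_def)
  define w where "w = c1 *\<^sub>R axis 4 1 + c2 *\<^sub>R gradG b L"
  have "\<forall>v\<in>tanMh L. inner w v = 0"
  proof
    fix v assume "v \<in> tanMh L"
    then have "orthogonal y (?f v)" by (intro y(2) span_base) auto
    then show "inner w v = 0" unfolding w_def yc orthogonal_def
      by (simp add: inner_add_left)
  qed
  from perp_T[OF M this] have "w = inner w L *\<^sub>R L + inner w (star L) *\<^sub>R star L" .
  then have eqs: "2*b*c2*L$1 = inner w L * L$1 + inner w (star L) * L$6"
     "2*b*c2*L$2 = inner w L * L$2 - inner w (star L) * L$5"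
     "2*c2*L$3 = inner w L * L$3 + inner w (star L) * L$4"
     "c1 = inner w L * L$4 + inner w (star L) * L$3"
     "0 = inner w L * L$5 - inner w (star L) * L$2"
     "0 = inner w L * L$6 + inner w (star L) * L$1"
    unfolding vec6_eq_iff by (simp_all add: w_def star_def algebra_simps)
  have pf: "L$1 * L$6 - L$2 * L$5 + L$3 * L$4 = 0" using M by (simp add: Mh_iff)
  show ?thesis using alg_R1[OF b c pf eqs] .
qed

lemma R2: assumes M: "L \<in> Mh (1/2)" and d: "momentum_rank Jf (Gb b) L = 0"
  shows "L$1 = 0 \<and> L$2 = 0 \<and> L$5 = 0 \<and> L$6 = 0 \<and> (L$3 = 0 \<or> L$4 = 0)"
proof -
  let ?f = "\<lambda>v. (inner (axis 4 1) v, inner (gradG b L) v)"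
  have "?f ` tanMh L \<subseteq> {0}" using d by (simp add: mr_eq)
  then have "\<forall>v\<in>tanMh L. inner (axis 4 1) v = 0" by (force simp: image_subset_iff zero_prod_def)
  from perp_T[OF M this] have "axis 4 1 = L$4 *\<^sub>R L + L$3 *\<^sub>R star L"
    by (simp add: inner6 star_def)
  then have eqs: "0 = L$4 * L$1 + L$3 * L$6" "0 = L$4 * L$2 - L$3 * L$5"
     "0 = L$4 * L$3 + L$3 * L$4" "1 = L$4 * L$4 + L$3 * L$3"
     "0 = L$4 * L$5 - L$3 * L$2" "0 = L$4 * L$6 + L$3 * L$1"
    unfolding vec6_eq_iff by (simp_all add: star_def algebra_simps)
  from eqs(3) have "L$3 = 0 \<or> L$4 = 0" by simp
  then show ?thesis
  proof
    assume h: "L$3 = 0"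
    then have "L$4 \<noteq> 0" using eqs(4) by auto
    then show ?thesis using eqs h by simp
  next
    assume h: "L$4 = 0"
    then have "L$3 \<noteq> 0" using eqs(4) by auto
    then show ?thesis using eqs h by simp
  qed
qed

definition re6 :: "complex^6 \<Rightarrow> real^6" where "re6 u = (\<chi> i. Re (u$i))"
definition im6 :: "complex^6 \<Rightarrow> real^6" where "im6 u = (\<chi> i. Im (u$i))"
lemma cplx_mv: "cplx A *v u = (\<chi> a. Complex ((A *v re6 u)$a) ((A *v im6 u)$a))"
  by (simp add: vec_eq_iff complex_eq_iff matrix_vector_mult_def cplx_def re6_def im6_def Re_sum Im_sum)

abbreviation Bm :: "real \<Rightarrow> real \<Rightarrow> real \<Rightarrow> real^6 \<Rightarrow> real^6^6" where
  "Bm b c1 c2 L \<equiv> c1 *\<^sub>R jacm (hamvf Jf) L + c2 *\<^sub>R jacm (hamvf (Gb b)) L"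
lemma Bm_mv: "Bm b c1 c2 L *v x = c1 *\<^sub>R XJ x + c2 *\<^sub>R DXG b L x"
  by (simp add: matrix_vector_mult_add_rdistrib scaleR_matrix_vector_assoc[symmetric] jacJ jacG)

lemma eig_sq: fixes A :: "real^6^6"
  assumes wT: "w \<in> tanMh L" and w0: "w \<noteq> 0" and AwT: "A *v w \<in> tanMh L"
    and AA: "A *v (A *v w) = - (\<omega>^2) *\<^sub>R w" and om: "\<omega> \<noteq> 0"
  shows "eig_on_tan L A (Complex 0 \<omega>)"
proof -
  define u where "u = (\<chi> i. Complex ((A *v w)$i) (\<omega> * w$i))"
  have re: "re6 u = A *v w" by (simp add: u_def re6_def vec_eq_iff)
  have im: "im6 u = \<omega> *\<^sub>R w" by (simp add: u_def im6_def vec_eq_iff)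
  have "u \<noteq> 0"
  proof
    assume "u = 0"
    then have "im6 u = 0" by (simp add: im6_def vec_eq_iff)
    then show False using im w0 om by simp
  qed
  moreover have "(\<chi> i. Re (u $ i)) \<in> tanMh L" using re AwT by (simp add: re6_def)
  moreover have "(\<chi> i. Im (u $ i)) \<in> tanMh L" using im wT
    by (simp add: im6_def tan_inner inner_scaleR_right)
  moreover have "cplx A *v u = Complex 0 \<omega> *s u"
    unfolding cplx_mv re im using AA
    by (simp add: vec_eq_iff complex_eq_iff u_def matrix_vector_mult_scaleR power2_eq_square)
  ultimately show ?thesis unfolding eig_on_tan_def by blast
qed

lemma transv_S1:
  assumes b: "b > 1" and M: "L \<in> Mh (1/2)" and z: "L$1 = 0" "L$2 = 0" "L$3 = 0"
  shows "transv_elliptic Jf (Gb b) L"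
proof -
  have n: "(L$4)^2 + (L$5)^2 + (L$6)^2 = 1" using M z by (simp add: Mh_iff)
  define q where "q = 4*b*(b*(L$4)^2 + (L$5)^2 + (L$6)^2)"
  have qpos: "q > 0"
  proof -
    have "(L$4)^2 \<le> b*(L$4)^2" using mult_right_mono[of 1 b "(L$4)^2"] b by simp
    then have "b*(L$4)^2 + (L$5)^2 + (L$6)^2 \<ge> (L$4)^2 + (L$5)^2 + (L$6)^2" by simp
    then show ?thesis unfolding q_def using b n by simp
  qed
  define \<omega> where "\<omega> = sqrt q"
  have om2: "\<omega>^2 = q" unfolding \<omega>_def using qpos by simp
  have om0: "\<omega> \<noteq> 0" unfolding \<omega>_def using qpos by simp
  let ?A = "Bm b 0 1 L"
  have "\<exists>w. w \<in> tanMh L \<and> w \<noteq> 0 \<and> ?A *v w \<in> tanMh L \<and> ?A *v (?A *v w) = - (\<omega>^2) *\<^sub>R w"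
  proof (cases "L$5 \<noteq> 0 \<or> L$6 \<noteq> 0")
    case True
    define w where "w = v6 (L$5) (L$6) 0 0 0 0"
    have "w \<in> tanMh L" unfolding w_def using z by (simp add: tan_inner inner6 star_def algebra_simps)
    moreover have "w \<noteq> 0" using True by (auto simp: w_def vec6_eq_iff)
    moreover have "?A *v w \<in> tanMh L" unfolding w_def Bm_mv using z
      by (simp add: tan_inner inner6 star_def DXG_def XJ_def algebra_simps)
    moreover have "?A *v (?A *v w) = - (\<omega>^2) *\<^sub>R w" unfolding w_def Bm_mv om2 q_def using z
      by (simp add: vec6_eq_iff DXG_def XJ_def algebra_simps power2_eq_square)
    ultimately show ?thesis by blast
  next
    case False
    then have z56: "L$5 = 0" "L$6 = 0" by auto
    then have "L$4 \<noteq> 0" using n by auto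
    define w where "w = v6 (L$4) 0 0 0 0 0"
    have "w \<in> tanMh L" unfolding w_def using z z56 by (simp add: tan_inner inner6 star_def algebra_simps)
    moreover have "w \<noteq> 0" using \<open>L$4 \<noteq> 0\<close> by (auto simp: w_def vec6_eq_iff)
    moreover have "?A *v w \<in> tanMh L" unfolding w_def Bm_mv using z z56
      by (simp add: tan_inner inner6 star_def DXG_def XJ_def algebra_simps)
    moreover have "?A *v (?A *v w) = - (\<omega>^2) *\<^sub>R w" unfolding w_def Bm_mv om2 q_def using z z56
      by (simp add: vec6_eq_iff DXG_def XJ_def algebra_simps power2_eq_square)
    ultimately show ?thesis by blast
  qed
  then obtain w where "w \<in> tanMh L" "w \<noteq> 0" "?A *v w \<in> tanMh L" "?A *v (?A *v w) = - (\<omega>^2) *\<^sub>R w"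
    by blast
  from eig_sq[OF this om0] have e: "eig_on_tan L ?A (Complex 0 \<omega>)" .
  have d: "\<forall>v\<in>tanMh L. 0 * frechet_derivative Jf (at L) v + 1 * frechet_derivative (Gb b) (at L) v = 0"
    using z by (simp add: fdJ fdG)
  show ?thesis unfolding transv_elliptic_def
    apply (rule exI[of _ 0], rule exI[of _ 1])
    using d e om0 by (auto simp: complex_eq_iff)
qed

lemma transv_S2:
  assumes b: "b > 1" and M: "L \<in> Mh (1/2)" and z: "L$3 = 0" "L$5 = 0" "L$6 = 0"
  shows "transv_elliptic Jf (Gb b) L"
proof -
  have n: "(L$1)^2 + (L$2)^2 + (L$4)^2 = 1" using M z by (simp add: Mh_iff)
  define q where "q = 4*b*((b-1)*((L$1)^2 + (L$2)^2) + b*(L$4)^2)"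
  have qpos: "q > 0"
  proof -
    have "(b-1)*((L$1)^2 + (L$2)^2) + b*(L$4)^2 \<ge> (b-1)*((L$1)^2 + (L$2)^2) + (b-1)*(L$4)^2"
      using b by (simp add: mult_right_mono)
    also have "(b-1)*((L$1)^2 + (L$2)^2) + (b-1)*(L$4)^2 = (b-1)*((L$1)^2 + (L$2)^2 + (L$4)^2)"
      by (simp add: algebra_simps)
    also have "\<dots> = b - 1" using n by simp
    finally have "(b-1)*((L$1)^2 + (L$2)^2) + b*(L$4)^2 \<ge> b - 1" .
    then show ?thesis unfolding q_def using b by (simp add: zero_less_mult_iff)
  qed
  define \<omega> where "\<omega> = sqrt q"
  have om2: "\<omega>^2 = q" unfolding \<omega>_def using qpos by simp
  have om0: "\<omega> \<noteq> 0" unfolding \<omega>_def using qpos by simp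
  let ?A = "Bm b (2*b*L$4) 1 L"
  have "\<exists>w. w \<in> tanMh L \<and> w \<noteq> 0 \<and> ?A *v w \<in> tanMh L \<and> ?A *v (?A *v w) = - (\<omega>^2) *\<^sub>R w"
  proof (cases "L$2 \<noteq> 0 \<or> L$4 \<noteq> 0")
    case True
    define w where "w = v6 0 0 (L$2) 0 (L$4) 0"
    have "w \<in> tanMh L" unfolding w_def using z by (simp add: tan_inner inner6 star_def algebra_simps)
    moreover have "w \<noteq> 0" using True by (auto simp: w_def vec6_eq_iff)
    moreover have "?A *v w \<in> tanMh L" unfolding w_def Bm_mv using z
      by (simp add: tan_inner inner6 star_def DXG_def XJ_def algebra_simps)
    moreover have "?A *v (?A *v w) = - (\<omega>^2) *\<^sub>R w" unfolding w_def Bm_mv om2 q_def using z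
      by (simp add: vec6_eq_iff DXG_def XJ_def algebra_simps power2_eq_square)
    ultimately show ?thesis by blast
  next
    case False
    then have z24: "L$2 = 0" "L$4 = 0" by auto
    then have "L$1 \<noteq> 0" using n by auto
    define w where "w = v6 0 0 (L$1) 0 0 0"
    have "w \<in> tanMh L" unfolding w_def using z z24 by (simp add: tan_inner inner6 star_def algebra_simps)
    moreover have "w \<noteq> 0" using \<open>L$1 \<noteq> 0\<close> by (auto simp: w_def vec6_eq_iff)
    moreover have "?A *v w \<in> tanMh L" unfolding w_def Bm_mv using z z24
      by (simp add: tan_inner inner6 star_def DXG_def XJ_def algebra_simps)
    moreover have "?A *v (?A *v w) = - (\<omega>^2) *\<^sub>R w" unfolding w_def Bm_mv om2 q_def using z z24
      by (simp add: vec6_eq_iff DXG_def XJ_def algebra_simps power2_eq_square)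
    ultimately show ?thesis by blast
  qed
  then obtain w where "w \<in> tanMh L" "w \<noteq> 0" "?A *v w \<in> tanMh L" "?A *v (?A *v w) = - (\<omega>^2) *\<^sub>R w"
    by blast
  from eig_sq[OF this om0] have e: "eig_on_tan L ?A (Complex 0 \<omega>)" .
  have d: "\<forall>v\<in>tanMh L. (2*b*L$4) * frechet_derivative Jf (at L) v + 1 * frechet_derivative (Gb b) (at L) v = 0"
  proof
    fix v assume "v \<in> tanMh L"
    then have "inner L v = 0" by (simp add: tan_inner)
    then have i0: "L$1* v$1 + L$2* v$2 + L$4* v$4 = 0" using z by (simp add: inner6)
    have "(2*b*L$4) * frechet_derivative Jf (at L) v + 1 * frechet_derivative (Gb b) (at L) v
       = 2*b*(L$1* v$1 + L$2* v$2 + L$4* v$4)" using z by (simp only: fdJ fdG, simp add: algebra_simps)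
    then show "(2*b*L$4) * frechet_derivative Jf (at L) v + 1 * frechet_derivative (Gb b) (at L) v = 0"
      using i0 by simp
  qed
  show ?thesis unfolding transv_elliptic_def
    apply (rule exI[of _ "2*b*L$4"], rule exI[of _ 1])
    using d e om0 by (auto simp: complex_eq_iff)
qed

definition c6 :: "complex \<Rightarrow> complex \<Rightarrow> complex \<Rightarrow> complex \<Rightarrow> complex \<Rightarrow> complex \<Rightarrow> complex^6" where
  "c6 a b c d e f = (\<chi> i. if i = 1 then a else if i = 2 then b else if i = 3 then c
     else if i = 4 then d else if i = 5 then e else f)"
lemma c6_nth[simp]: "c6 a b c d e f $ 1 = a" "c6 a b c d e f $ 2 = b" "c6 a b c d e f $ 3 = c"
  "c6 a b c d e f $ 4 = d" "c6 a b c d e f $ 5 = e" "c6 a b c d e f $ 6 = f"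
  by (simp_all add: c6_def)
lemma re6_c6[simp]: "re6 (c6 a b c d e f) = v6 (Re a) (Re b) (Re c) (Re d) (Re e) (Re f)"
  by (simp add: re6_def vec6_eq_iff)
lemma im6_c6[simp]: "im6 (c6 a b c d e f) = v6 (Im a) (Im b) (Im c) (Im d) (Im e) (Im f)"
  by (simp add: im6_def vec6_eq_iff)
lemma re6_nth[simp]: "re6 u $ i = Re (u $ i)" by (simp add: re6_def)
lemma im6_nth[simp]: "im6 u $ i = Im (u $ i)" by (simp add: im6_def)

lemma eig_iff: "eig_on_tan L A \<mu> \<longleftrightarrow> (\<exists>u. u \<noteq> 0 \<and> re6 u \<in> tanMh L \<and> im6 u \<in> tanMh L \<and>
   (\<forall>a. Complex ((A *v re6 u)$a) ((A *v im6 u)$a) = \<mu> * u$a))"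
  unfolding eig_on_tan_def cplx_mv by (simp add: re6_def im6_def vec_eq_iff)

lemma eig_intro6: assumes "u \<noteq> 0" "re6 u \<in> tanMh L" "im6 u \<in> tanMh L"
  "\<And>a. a = 1 \<or> a = 2 \<or> a = 3 \<or> a = 4 \<or> a = 5 \<or> a = 6 \<Longrightarrow>
     Complex ((A *v re6 u)$a) ((A *v im6 u)$a) = \<mu> * u$a"
  shows "eig_on_tan L A \<mu>"
  unfolding eig_iff using assms exhaust_6 by blast

lemma sq_real_Re0: fixes \<mu> :: complex
  assumes "\<mu>^2 = complex_of_real r" "r < 0" shows "Re \<mu> = 0"
proof -
  have a: "(Re \<mu>)^2 - (Im \<mu>)^2 = r" using arg_cong[OF assms(1), of Re] by (simp add: power2_eq_square)
  have b: "Re \<mu> = 0 \<or> Im \<mu> = 0" using arg_cong[OF assms(1), of Im] by (auto simp: power2_eq_square)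
  show ?thesis
  proof (rule ccontr)
    assume "Re \<mu> \<noteq> 0"
    then have "Im \<mu> = 0" using b by simp
    then have "(Re \<mu>)^2 = r" using a by simp
    moreover have "(Re \<mu>)^2 \<ge> 0" by simp
    ultimately show False using assms(2) by linarith
  qed
qed

lemma EE_e4:
  assumes b: "b > 1" and sg: "sg = 1 \<or> sg = -1" and L: "L = v6 0 0 0 sg 0 0"
  shows "elliptic_elliptic Jf (Gb b) L"
proof -
  define w where "w = 2*b* sg - 1"
  have w1: "w > 1 \<or> w < -1" using sg b unfolding w_def by auto
  have mv: "Bm b 1 1 L *v x = v6 (w * x$2) (-w * x$1) 0 0 (-x$6) (x$5)" for x
    unfolding Bm_mv L w_def by (simp add: XJ_def DXG_def vec6_eq_iff algebra_simps)
  have mv2: "(jacm (hamvf Jf) L + jacm (hamvf (Gb b)) L) *v x = v6 (w * x$2) (-w * x$1) 0 0 (-x$6) (x$5)" for x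
    using mv[of x] by simp
  have T: "x \<in> tanMh L \<longleftrightarrow> x$3 = 0 \<and> x$4 = 0" for x
    using sg unfolding L by (auto simp: tan_inner inner6 star_def)
  have indep: "indep_on_tan L (jacm (hamvf Jf) L) (jacm (hamvf (Gb b)) L)"
    unfolding indep_on_tan_def
  proof (intro allI impI)
    fix c1 c2 assume h: "\<forall>v\<in>tanMh L. Bm b c1 c2 L *v v = 0"
    have "v6 0 0 0 0 1 0 \<in> tanMh L" "v6 1 0 0 0 0 0 \<in> tanMh L" by (simp_all add: T)
    then have "Bm b c1 c2 L *v v6 0 0 0 0 1 0 = 0" "Bm b c1 c2 L *v v6 1 0 0 0 0 0 = 0" using h by auto
    then have "c1 = 0" "c1 - 2*b* sg*c2 = 0"
      unfolding Bm_mv L by (simp_all add: XJ_def DXG_def vec6_eq_iff algebra_simps)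
    then show "c1 = 0 \<and> c2 = 0" using sg b by auto
  qed
  have e1: "eig_on_tan L (Bm b 1 1 L) (Complex 0 w)"
    by (rule eig_intro6[where u = "c6 1 (Complex 0 1) 0 0 0 0"])
       (auto simp: mv mv2 T vec6_eq_iff complex_eq_iff)
  have e2: "eig_on_tan L (Bm b 1 1 L) (Complex 0 (-w))"
    by (rule eig_intro6[where u = "c6 1 (Complex 0 (-1)) 0 0 0 0"])
       (auto simp: mv mv2 T vec6_eq_iff complex_eq_iff)
  have e3: "eig_on_tan L (Bm b 1 1 L) (Complex 0 (-1))"
    by (rule eig_intro6[where u = "c6 0 0 0 0 1 (Complex 0 1)"])
       (auto simp: mv mv2 T vec6_eq_iff complex_eq_iff)
  have e4: "eig_on_tan L (Bm b 1 1 L) (Complex 0 1)"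
    by (rule eig_intro6[where u = "c6 0 0 0 0 1 (Complex 0 (-1))"])
       (auto simp: mv mv2 T vec6_eq_iff complex_eq_iff)
  have dist: "distinct [Complex 0 w, Complex 0 (-w), Complex 0 (-1), Complex 0 1]"
    using w1 by auto
  have allre: "Re \<mu> = 0" if "eig_on_tan L (Bm b 1 1 L) \<mu>" for \<mu>
  proof -
    from that[unfolded eig_iff] obtain u where u: "u \<noteq> 0" "re6 u \<in> tanMh L" "im6 u \<in> tanMh L"
      "\<forall>a. Complex ((Bm b 1 1 L *v re6 u)$a) ((Bm b 1 1 L *v im6 u)$a) = \<mu> * u$a"
      by blast
    have u34: "u$3 = 0" "u$4 = 0" using u(2,3) by (simp_all add: T complex_eq_iff)
    have q1: "\<mu> * u$1 = w * u$2" using u(4)[rule_format, of 1] by (simp add: mv mv2 complex_eq_iff)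
    have q2: "\<mu> * u$2 = - w * u$1" using u(4)[rule_format, of 2] by (simp add: mv mv2 complex_eq_iff)
    have q5: "\<mu> * u$5 = - u$6" using u(4)[rule_format, of 5] by (simp add: mv mv2 complex_eq_iff)
    have q6: "\<mu> * u$6 = u$5" using u(4)[rule_format, of 6] by (simp add: mv mv2 complex_eq_iff)
    have p1: "(\<mu>^2 + w^2) * u$1 = 0"
    proof -
      have "(\<mu>^2 + w^2) * u$1 = \<mu>*(\<mu>*u$1) + w^2*u$1" by (simp add: power2_eq_square algebra_simps)
      also have "\<dots> = w*(\<mu>*u$2) + w^2*u$1" using q1 by (simp add: algebra_simps)
      also have "\<dots> = 0" using q2 by (simp add: power2_eq_square algebra_simps)
      finally show ?thesis .
    qed
    have p2: "(\<mu>^2 + w^2) * u$2 = 0"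
    proof -
      have "(\<mu>^2 + w^2) * u$2 = \<mu>*(\<mu>*u$2) + w^2*u$2" by (simp add: power2_eq_square algebra_simps)
      also have "\<dots> = -w*(\<mu>*u$1) + w^2*u$2" using q2 by (simp add: algebra_simps)
      also have "\<dots> = 0" using q1 by (simp add: power2_eq_square algebra_simps)
      finally show ?thesis .
    qed
    have p5: "(\<mu>^2 + 1) * u$5 = 0"
    proof -
      have "(\<mu>^2 + 1) * u$5 = \<mu>*(\<mu>*u$5) + u$5" by (simp add: power2_eq_square algebra_simps)
      also have "\<dots> = -(\<mu>*u$6) + u$5" using q5 by (simp add: algebra_simps)
      also have "\<dots> = 0" using q6 by (simp add: algebra_simps)
      finally show ?thesis .
    qed
    have p6: "(\<mu>^2 + 1) * u$6 = 0"
    proof -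
      have "(\<mu>^2 + 1) * u$6 = \<mu>*(\<mu>*u$6) + u$6" by (simp add: power2_eq_square algebra_simps)
      also have "\<dots> = \<mu>*u$5 + u$6" using q6 by (simp add: algebra_simps)
      also have "\<dots> = 0" using q5 by (simp add: algebra_simps)
      finally show ?thesis .
    qed
    have nz: "u$1 \<noteq> 0 \<or> u$2 \<noteq> 0 \<or> u$5 \<noteq> 0 \<or> u$6 \<noteq> 0"
    proof (rule ccontr)
      assume "\<not> ?thesis"
      then have "u = 0" using u34 by (simp add: vec6_eq_iff)
      then show False using u(1) by simp
    qed
    have A: "\<mu>^2 + (complex_of_real w)^2 = 0 \<or> \<mu>^2 + 1 = 0" using nz p1 p2 p5 p6 by auto
    then show ?thesis
    proof
      assume "\<mu>^2 + (complex_of_real w)^2 = 0"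
      then have "\<mu>^2 = -((complex_of_real w)^2)" by (rule eq_neg_iff_add_eq_0[THEN iffD2])
      then have "\<mu>^2 = complex_of_real (-(w^2))" by simp
      moreover have "-(w^2) < 0" using w1 by auto
      ultimately show ?thesis by (rule sq_real_Re0)
    next
      assume "\<mu>^2 + 1 = 0"
      then have "\<mu>^2 = - 1" by (rule eq_neg_iff_add_eq_0[THEN iffD2])
      then have "\<mu>^2 = complex_of_real (-1)" by simp
      then show ?thesis by (rule sq_real_Re0) simp
    qed
  qed
  have reg: "regular_on_tan L (Bm b 1 1 L)" unfolding regular_on_tan_def
    using e1 e2 e3 e4 dist by blast
  show ?thesis unfolding elliptic_elliptic_def Let_def using indep reg allre by blast
qed

lemma ff_alg: fixes \<mu> u1 u2 u5 u6 c h :: complex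
  assumes c: "c*c = 1" and q1: "\<mu>*u1 = -u2 + 2*c*u5" and q2: "\<mu>*u2 = u1 + 2*c*u6"
    and q5: "\<mu>*u5 = -u6 + h*c*u1" and q6: "\<mu>*u6 = u5 + h*c*u2"
  shows "((\<mu>^2 - (2*h - 1))^2 + 8*h) * u1 = 0" "((\<mu>^2 - (2*h - 1))^2 + 8*h) * u2 = 0"
    "((\<mu>^2 - (2*h - 1))^2 + 8*h) * u5 = 0" "((\<mu>^2 - (2*h - 1))^2 + 8*h) * u6 = 0"
  using assms by algebra+

lemma FF_e3:
  assumes b: "b > 1" and sg: "sg = 1 \<or> sg = -1" and L: "L = v6 0 0 sg 0 0 0"
  shows "focus_focus Jf (Gb b) L"
proof -
  define q where "q = sqrt (b - 1)"
  have q0: "q > 0" using b unfolding q_def by simp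
  have qq: "q * q = b - 1" using b unfolding q_def by simp
  have mv: "Bm b 1 1 L *v x = v6 (-x$2 + 2* sg*x$5) (x$1 + 2* sg*x$6) 0 0
      (-x$6 + 2*(b-1)* sg*x$1) (x$5 + 2*(b-1)* sg*x$2)" for x
    unfolding Bm_mv L by (simp add: XJ_def DXG_def vec6_eq_iff algebra_simps)
  have mv2: "(jacm (hamvf Jf) L + jacm (hamvf (Gb b)) L) *v x = v6 (-x$2 + 2* sg*x$5) (x$1 + 2* sg*x$6) 0 0
      (-x$6 + 2*(b-1)* sg*x$1) (x$5 + 2*(b-1)* sg*x$2)" for x
    using mv[of x] by simp
  have T: "x \<in> tanMh L \<longleftrightarrow> x$3 = 0 \<and> x$4 = 0" for x
    using sg unfolding L by (auto simp: tan_inner inner6 star_def)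
  have indep: "indep_on_tan L (jacm (hamvf Jf) L) (jacm (hamvf (Gb b)) L)"
    unfolding indep_on_tan_def
  proof (intro allI impI)
    fix c1 c2 assume h: "\<forall>v\<in>tanMh L. Bm b c1 c2 L *v v = 0"
    have "v6 1 0 0 0 0 0 \<in> tanMh L" by (simp add: T)
    then have "Bm b c1 c2 L *v v6 1 0 0 0 0 0 = 0" using h by auto
    then have "c1 = 0" "c2 * (2*(b-1)* sg) = 0"
      unfolding Bm_mv L by (simp_all add: XJ_def DXG_def vec6_eq_iff algebra_simps)
    then show "c1 = 0 \<and> c2 = 0" using sg b by auto
  qed
  have eig: "eig_on_tan L (Bm b 1 1 L) (Complex (2* sg* \<sigma>*q) \<tau>)"
    if st: "\<sigma> = 1 \<or> \<sigma> = -1" "\<tau> = 1 \<or> \<tau> = -1" for \<sigma> \<tau>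
  proof (rule eig_intro6[where u = "c6 1 (Complex 0 (-\<tau>)) 0 0 (Complex (\<sigma>*q) 0) (Complex 0 (-\<tau>* \<sigma>*q))"])
    show "c6 1 (Complex 0 (-\<tau>)) 0 0 (Complex (\<sigma>*q) 0) (Complex 0 (-\<tau>* \<sigma>*q)) \<noteq> 0"
      by (auto simp: vec6_eq_iff)
    show "re6 (c6 1 (Complex 0 (-\<tau>)) 0 0 (Complex (\<sigma>*q) 0) (Complex 0 (-\<tau>* \<sigma>*q))) \<in> tanMh L"
      by (simp add: T)
    show "im6 (c6 1 (Complex 0 (-\<tau>)) 0 0 (Complex (\<sigma>*q) 0) (Complex 0 (-\<tau>* \<sigma>*q))) \<in> tanMh L"
      by (simp add: T)
    fix a :: 6 assume a6: "a = 1 \<or> a = 2 \<or> a = 3 \<or> a = 4 \<or> a = 5 \<or> a = 6"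
    then show "Complex ((Bm b 1 1 L *v re6 (c6 1 (Complex 0 (-\<tau>)) 0 0 (Complex (\<sigma>*q) 0) (Complex 0 (-\<tau>* \<sigma>*q))))$a)
       ((Bm b 1 1 L *v im6 (c6 1 (Complex 0 (-\<tau>)) 0 0 (Complex (\<sigma>*q) 0) (Complex 0 (-\<tau>* \<sigma>*q))))$a) =
       Complex (2* sg* \<sigma>*q) \<tau> * (c6 1 (Complex 0 (-\<tau>)) 0 0 (Complex (\<sigma>*q) 0) (Complex 0 (-\<tau>* \<sigma>*q)))$a"
    proof -
      have bq: "b = q*q + 1" using qq by simp
      show ?thesis using st sg a6
        apply -
        apply (simp only: mv)
        apply (elim disjE)
        apply (simp_all add: complex_eq_iff bq algebra_simps)
        done
    qed
  qed
  have e1: "eig_on_tan L (Bm b 1 1 L) (Complex (2* sg*q) 1)" using eig[of 1 1] by simp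
  have e2: "eig_on_tan L (Bm b 1 1 L) (Complex (2* sg*q) (-1))" using eig[of 1 "-1"] by simp
  have e3: "eig_on_tan L (Bm b 1 1 L) (Complex (-(2* sg*q)) 1)" using eig[of "-1" 1] by simp
  have e4: "eig_on_tan L (Bm b 1 1 L) (Complex (-(2* sg*q)) (-1))" using eig[of "-1" "-1"] by simp
  have dist: "distinct [Complex (2* sg*q) 1, Complex (2* sg*q) (-1), Complex (-(2* sg*q)) 1, Complex (-(2* sg*q)) (-1)]"
    using q0 sg by auto
  have allff: "Re \<mu> \<noteq> 0 \<and> Im \<mu> \<noteq> 0" if "eig_on_tan L (Bm b 1 1 L) \<mu>" for \<mu>
  proof -
    from that[unfolded eig_iff] obtain u where u: "u \<noteq> 0" "re6 u \<in> tanMh L" "im6 u \<in> tanMh L"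
      "\<forall>a. Complex ((Bm b 1 1 L *v re6 u)$a) ((Bm b 1 1 L *v im6 u)$a) = \<mu> * u$a"
      by blast
    have u34: "u$3 = 0" "u$4 = 0" using u(2,3) by (simp_all add: T complex_eq_iff)
    have q1: "\<mu> * u$1 = -u$2 + 2*complex_of_real sg*u$5" using u(4)[rule_format, of 1] by (simp add: mv mv2 complex_eq_iff)
    have q2: "\<mu> * u$2 = u$1 + 2*complex_of_real sg*u$6" using u(4)[rule_format, of 2] by (simp add: mv mv2 complex_eq_iff)
    have q5: "\<mu> * u$5 = -u$6 + complex_of_real (2*(b-1))*complex_of_real sg*u$1" using u(4)[rule_format, of 5] by (simp add: mv mv2 complex_eq_iff)
    have q6: "\<mu> * u$6 = u$5 + complex_of_real (2*(b-1))*complex_of_real sg*u$2" using u(4)[rule_format, of 6] by (simp add: mv mv2 complex_eq_iff)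
    have cc: "complex_of_real sg * complex_of_real sg = 1" using sg by auto
    note P = ff_alg[OF cc q1 q2 q5 q6]
    have nz: "u$1 \<noteq> 0 \<or> u$2 \<noteq> 0 \<or> u$5 \<noteq> 0 \<or> u$6 \<noteq> 0"
    proof (rule ccontr)
      assume "\<not> ?thesis"
      then have "u = 0" using u34 by (simp add: vec6_eq_iff)
      then show False using u(1) by simp
    qed
    have P0: "(\<mu>^2 - (2*complex_of_real (2*(b-1)) - 1))^2 + 8*complex_of_real (2*(b-1)) = 0"
      using nz P by auto
    show ?thesis
    proof (rule ccontr)
      assume "\<not> ?thesis"
      then have "Re \<mu> = 0 \<or> Im \<mu> = 0" by simp
      then have "Im (\<mu>^2) = 0" by (auto simp: power2_eq_square)
      then have "\<mu>^2 = complex_of_real (Re (\<mu>^2))" by (simp add: complex_eq_iff)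
      then have "complex_of_real ((Re (\<mu>^2) - (4*(b-1) - 1))^2 + 16*(b-1)) = 0"
        using P0 by (simp add: algebra_simps)
      then have "(Re (\<mu>^2) - (4*(b-1) - 1))^2 + 16*(b-1) = 0" by (simp only: of_real_eq_0_iff)
      moreover have "(Re (\<mu>^2) - (4*(b-1) - 1))^2 + 16*(b-1) > 0" using b
        by (simp add: add_nonneg_pos)
      ultimately show False by simp
    qed
  qed
  have reg: "regular_on_tan L (Bm b 1 1 L)" unfolding regular_on_tan_def
    using e1 e2 e3 e4 dist by blast
  show ?thesis unfolding focus_focus_def Let_def using indep reg allff by blast
qed

lemma hd_vec6r: fixes F :: "real \<Rightarrow> real^6"
  assumes "\<And>a. ((\<lambda>x. F x $ a) has_derivative (\<lambda>v. F' v $ a)) (at t)"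
  shows "(F has_derivative F') (at t)"
proof -
  have "\<forall>i\<in>Basis. ((\<lambda>x. F x \<bullet> i) has_derivative (\<lambda>x. F' x \<bullet> i)) (at t within UNIV)"
  proof (rule ballI)
    fix i :: "real^6" assume "i \<in> Basis"
    then obtain a where i: "i = axis a 1" by (auto simp add: Basis_vec_def)
    show "((\<lambda>x. F x \<bullet> i) has_derivative (\<lambda>x. F' x \<bullet> i)) (at t within UNIV)"
      using assms[of a] unfolding i by (simp add: inner_axis)
  qed
  then have "(F has_derivative F') (at t within UNIV)"
    using has_derivative_componentwise_within by blast
  then show ?thesis by simp
qed

definition phi :: "real \<Rightarrow> real^6 \<Rightarrow> real^6" where
  "phi t L = v6 (cos t * L$1 - sin t * L$2) (sin t * L$1 + cos t * L$2) (L$3) (L$4)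
     (cos t * L$5 - sin t * L$6) (sin t * L$5 + cos t * L$6)"

lemma hfd_comp: assumes "((\<lambda>s. f s) has_field_derivative D) (at t)"
  shows "((\<lambda>s. f s) has_derivative (\<lambda>h. h * D)) (at t)"
  using assms unfolding has_field_derivative_def
  by (rule has_derivative_eq_rhs) (simp add: fun_eq_iff mult.commute)

lemma phi_deriv: "((\<lambda>s. phi s L) has_vector_derivative XJ (phi t L)) (at t)"
  unfolding has_vector_derivative_def
proof (rule hd_vec6r)
  fix a :: 6
  have "a = 1 \<or> a = 2 \<or> a = 3 \<or> a = 4 \<or> a = 5 \<or> a = 6" by (rule exhaust_6)
  then show "((\<lambda>s. phi s L $ a) has_derivative (\<lambda>h. (h *\<^sub>R XJ (phi t L)) $ a)) (at t)"
    apply (elim disjE)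
    apply (simp_all add: phi_def XJ_def)
    apply (rule hfd_comp, auto intro!: derivative_eq_intros)+
    apply (auto simp: fun_eq_iff algebra_simps)
    done
qed

lemma phi_M: assumes "L \<in> Mh (1/2)" shows "phi t L \<in> Mh (1/2)"
proof -
  have cs: "(cos t)^2 + (sin t)^2 = 1" by simp
  have n: "(L$1)^2 + (L$2)^2 + (L$3)^2 + (L$4)^2 + (L$5)^2 + (L$6)^2 = 1"
    and p: "L$1 * L$6 - L$2 * L$5 + L$3 * L$4 = 0" using assms by (simp_all add: Mh_iff)
  have "(cos t * L$1 - sin t * L$2)^2 + (sin t * L$1 + cos t * L$2)^2 + (L$3)^2 + (L$4)^2
      + (cos t * L$5 - sin t * L$6)^2 + (sin t * L$5 + cos t * L$6)^2 = 1"
    using cs n by algebra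
  moreover have "(cos t * L$1 - sin t * L$2) * (sin t * L$5 + cos t * L$6)
     - (sin t * L$1 + cos t * L$2) * (cos t * L$5 - sin t * L$6) + L$3 * L$4 = 0"
    using cs p by algebra
  ultimately show ?thesis by (simp add: Mh_iff phi_def)
qed

lemma genS1: "generates_S1 (Mh (1/2)) Jf"
  unfolding generates_S1_def
proof (rule exI[of _ phi], intro conjI ballI allI impI)
  fix L assume L: "L \<in> Mh (1/2)"
  show "phi 0 L = L" by (simp add: phi_def vec6_eq_iff)
  show "phi t L \<in> Mh (1/2)" for t using phi_M[OF L] .
  show "((\<lambda>s. phi s L) has_vector_derivative hamvf Jf (phi t L)) (at t)" for t
    unfolding hamvfJ by (rule phi_deriv)
  show "phi (t + 2 * pi) L = phi t L" for t by (simp add: phi_def)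
next
  fix t :: real assume t: "0 < t \<and> t < 2 * pi"
  let ?L = "v6 1 0 0 0 0 0"
  have "?L \<in> Mh (1/2)" by (simp add: Mh_iff)
  moreover have "phi t ?L \<noteq> ?L"
  proof
    assume "phi t ?L = ?L"
    then have "cos t = 1" by (simp add: phi_def vec6_eq_iff)
    then obtain n :: int where n: "t = n * 2 * pi" by (auto simp: cos_one_2pi_int)
    then have "0 < n" using t by (simp add: zero_less_mult_iff)
    moreover have "n < 1" using t n by simp
    ultimately show False by simp
  qed
  ultimately show "\<exists>L\<in>Mh (1/2). phi t L \<noteq> L" by blast
qed

lemma rank_le2: "momentum_rank Jf (Gb b) L \<le> 2"
proof -
  have "momentum_rank Jf (Gb b) L \<le> DIM(real \<times> real)" unfolding mr_eq by (rule dim_subset_UNIV)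
  then show ?thesis by simp
qed

lemma rank2: assumes b: "b > 1" and M: "L \<in> Mh (1/2)"
  and n: "\<not> ((L$1 = 0 \<and> L$2 = 0 \<and> L$3 = 0) \<or> (L$3 = 0 \<and> L$5 = 0 \<and> L$6 = 0) \<or>
         (L$1 = 0 \<and> L$2 = 0 \<and> L$4 = 0 \<and> L$5 = 0 \<and> L$6 = 0))"
  shows "momentum_rank Jf (Gb b) L = 2"
  using R1[OF b M] n rank_le2[of b L] by fastforce

lemma perp3: fixes B1 B2 B3 :: real
  shows "\<exists>w1 w2 w3. w1^2 + w2^2 + w3^2 = 1 \<and> B1*w1 + B2*w2 + B3*w3 = 0"
proof (cases "B1^2 + B2^2 > 0")
  case True
  define r where "r = sqrt (B1^2 + B2^2)"
  have r: "r > 0" "r^2 = B1^2 + B2^2" using True unfolding r_def by simp_all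
  have "(-B2/r)^2 + (B1/r)^2 + 0^2 = (B1^2+B2^2)/r^2"
    by (simp add: power_divide add_divide_distrib algebra_simps)
  also have "\<dots> = r^2/r^2" using r(2) by simp
  also have "\<dots> = 1" using r(1) by simp
  finally have 1: "(-B2/r)^2 + (B1/r)^2 + 0^2 = 1" .
  have 2: "B1*(-B2/r) + B2*(B1/r) + B3*0 = 0" by (simp add: algebra_simps)
  show ?thesis using 1 2 by blast
next
  case False
  then have "B1 = 0" "B2 = 0" by (simp_all add: sum_power2_gt_zero_iff)
  then show ?thesis by (intro exI[of _ 1] exI[of _ 0]) simp
qed

lemma avoid_finite: fixes lo :: real assumes "lo < 1" "finite F"
  shows "\<exists>c. lo < c \<and> c < 1 \<and> c \<notin> F"
proof -
  have "infinite {lo<..<1}" using assms(1) by simp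
  then have "infinite ({lo<..<1} - F)" using assms(2) by (rule Diff_infinite_finite[rotated])
  then have "{lo<..<1} - F \<noteq> {}" by (metis finite.emptyI)
  then obtain c where "c \<in> {lo<..<1} - F" by blast
  then show ?thesis by auto
qed

lemma dense_pt: assumes b: "b > 1" and M: "L \<in> Mh (1/2)" and e: "e > 0"
  shows "\<exists>L'\<in>{L\<in>Mh (1/2). momentum_rank Jf (Gb b) L = 2}. dist L' L < e"
proof -
  define A1 where "A1 = L$1 + L$6"
  define A2 where "A2 = L$2 - L$5"
  define A3 where "A3 = L$3 + L$4"
  define B1 where "B1 = L$1 - L$6"
  define B2 where "B2 = L$2 + L$5"
  define B3 where "B3 = L$3 - L$4"
  have n: "(L$1)^2 + (L$2)^2 + (L$3)^2 + (L$4)^2 + (L$5)^2 + (L$6)^2 = 1"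
    and p: "L$1 * L$6 - L$2 * L$5 + L$3 * L$4 = 0" using M by (simp_all add: Mh_iff)
  have nA: "A1^2 + A2^2 + A3^2 = 1" unfolding A1_def A2_def A3_def using n p by algebra
  have nB: "B1^2 + B2^2 + B3^2 = 1" unfolding B1_def B2_def B3_def using n p by algebra
  obtain w1 w2 w3 where w: "w1^2 + w2^2 + w3^2 = 1" "B1* w1 + B2* w2 + B3* w3 = 0"
    using perp3 by blast
  define F where "F = {-(A1* B1 + A2* B2 + A3* B3), B1* A1 + B2* A2 - B3* A3, A1* B1 + A2* B2 + A3* B3}"
  have "max 0 (1 - e^2) < 1" using e by simp
  then obtain c where c: "max 0 (1 - e^2) < c" "c < 1" "c \<notin> F"
    using avoid_finite[of "max 0 (1 - e^2)" F] unfolding F_def by blast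
  define s where "s = sqrt (1 - c^2)"
  have c2: "c^2 < 1" using c by (simp add: abs_square_less_1)
  have s2: "s^2 = 1 - c^2" unfolding s_def using c2 by simp
  define C1 where "C1 = c* B1 + s* w1"
  define C2 where "C2 = c* B2 + s* w2"
  define C3 where "C3 = c* B3 + s* w3"
  have nC: "C1^2 + C2^2 + C3^2 = 1"
  proof -
    have "C1^2 + C2^2 + C3^2 = c^2*(B1^2+B2^2+B3^2) + s^2*(w1^2+w2^2+w3^2) + 2* c* s*(B1* w1+B2* w2+B3* w3)"
      unfolding C1_def C2_def C3_def by algebra
    then show ?thesis using nB w s2 by simp
  qed
  have BC: "B1* C1 + B2* C2 + B3* C3 = c"
  proof -
    have "B1* C1 + B2* C2 + B3* C3 = c*(B1^2+B2^2+B3^2) + s*(B1* w1+B2* w2+B3* w3)"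
      unfolding C1_def C2_def C3_def by algebra
    then show ?thesis using nB w by simp
  qed
  have dC: "(C1-B1)^2 + (C2-B2)^2 + (C3-B3)^2 = 2 - 2* c"
  proof -
    have "(C1-B1)^2 + (C2-B2)^2 + (C3-B3)^2 = (C1^2 + C2^2 + C3^2) + (B1^2+B2^2+B3^2) - 2*(B1* C1 + B2* C2 + B3* C3)"
      by algebra
    then show ?thesis using nC nB BC by simp
  qed
  define L' where "L' = v6 ((A1+C1)/2) ((A2+C2)/2) ((A3+C3)/2) ((A3-C3)/2) ((C2-A2)/2) ((A1-C1)/2)"
  have L'M: "L' \<in> Mh (1/2)"
  proof -
    have "((A1+C1)/2)^2 + ((A2+C2)/2)^2 + ((A3+C3)/2)^2 + ((A3-C3)/2)^2 + ((C2-A2)/2)^2 + ((A1-C1)/2)^2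
       = ((A1^2+A2^2+A3^2) + (C1^2+C2^2+C3^2))/2" by (simp add: field_simps power2_eq_square)
    moreover have "(A1+C1)/2 * ((A1-C1)/2) - (A2+C2)/2 * ((C2-A2)/2) + (A3+C3)/2 * ((A3-C3)/2)
       = ((A1^2+A2^2+A3^2) - (C1^2+C2^2+C3^2))/4" by (simp add: field_simps power2_eq_square)
    ultimately show ?thesis unfolding L'_def using nA nC by (simp add: Mh_iff)
  qed
  have L'r: "momentum_rank Jf (Gb b) L' = 2"
  proof (rule rank2[OF b L'M])
    show "\<not> ((L'$1 = 0 \<and> L'$2 = 0 \<and> L'$3 = 0) \<or> (L'$3 = 0 \<and> L'$5 = 0 \<and> L'$6 = 0) \<or>
         (L'$1 = 0 \<and> L'$2 = 0 \<and> L'$4 = 0 \<and> L'$5 = 0 \<and> L'$6 = 0))"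
    proof (intro notI, elim disjE conjE)
      assume "L'$1 = 0" "L'$2 = 0" "L'$3 = 0"
      then have "C1 = -A1" "C2 = -A2" "C3 = -A3" unfolding L'_def by simp_all
      then have "c = -(A1* B1 + A2* B2 + A3* B3)" using BC by (simp add: algebra_simps)
      then show False using c(3) unfolding F_def by simp
    next
      assume "L'$3 = 0" "L'$5 = 0" "L'$6 = 0"
      then have "C1 = A1" "C2 = A2" "C3 = -A3" unfolding L'_def by simp_all
      then have "c = B1* A1 + B2* A2 - B3* A3" using BC by (simp add: algebra_simps)
      then show False using c(3) unfolding F_def by simp
    next
      assume "L'$1 = 0" "L'$2 = 0" "L'$4 = 0" "L'$5 = 0" "L'$6 = 0"
      then have "C1 = A1" "C2 = A2" "C3 = A3" unfolding L'_def by simp_all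
      then have "c = A1* B1 + A2* B2 + A3* B3" using BC by (simp add: algebra_simps)
      then show False using c(3) unfolding F_def by simp
    qed
  qed
  have Leq: "L = v6 ((A1+B1)/2) ((A2+B2)/2) ((A3+B3)/2) ((A3-B3)/2) ((B2-A2)/2) ((A1-B1)/2)"
    unfolding A1_def A2_def A3_def B1_def B2_def B3_def by (simp add: vec6_eq_iff)
  have "(dist L' L)^2 = ((C1-B1)^2 + (C2-B2)^2 + (C3-B3)^2)/2"
  proof -
    have "(dist L' L)^2 = inner (L' - L) (L' - L)" by (simp add: dist_norm power2_norm_eq_inner)
    also have "\<dots> = ((C1-B1)^2 + (C2-B2)^2 + (C3-B3)^2)/2"
      unfolding inner6 by (subst (1 2 3 4 5 6 7 8 9 10 11 12) Leq) (simp add: L'_def power2_eq_square field_simps)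
    finally show ?thesis .
  qed
  also have "\<dots> = 1 - c" using dC by simp
  also have "\<dots> < e^2" using c(1) by simp
  finally have "(dist L' L)^2 < e^2" .
  then have "dist L' L < e" using e by (simp add: power_less_imp_less_base)
  then show ?thesis using L'M L'r by blast
qed

lemma dense: assumes b: "b > 1"
  shows "Mh (1/2) \<subseteq> closure {L\<in>Mh (1/2). momentum_rank Jf (Gb b) L = 2}"
  using dense_pt[OF b] by (auto simp: closure_approachable)

lemma rank0_e3: assumes M: "L \<in> Mh (1/2)" and z: "L$1 = 0" "L$2 = 0" "L$4 = 0" "L$5 = 0" "L$6 = 0"
  shows "momentum_rank Jf (Gb b) L = 0"
proof -
  have "L$3 \<noteq> 0" using M z by (auto simp: Mh_iff)
  have "(\<lambda>v. (inner (axis 4 1) v, inner (gradG b L) v)) ` tanMh L \<subseteq> {0}"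
  proof
    fix y assume "y \<in> (\<lambda>v. (inner (axis 4 1) v, inner (gradG b L) v)) ` tanMh L"
    then obtain v where v: "v \<in> tanMh L" and y: "y = (inner (axis 4 1) v, inner (gradG b L) v)" by blast
    from v have "L$3 * v$3 = 0" "L$3 * v$4 = 0" using z by (simp_all add: tan_inner inner6 star_def)
    then have "v$3 = 0" "v$4 = 0" using \<open>L$3 \<noteq> 0\<close> by simp_all
    then show "y \<in> {0}" using y z by (simp add: inner6 zero_prod_def)
  qed
  then show ?thesis by (simp add: mr_eq)
qed

theorem corollary5:
  fixes b :: real
  assumes "b > 1"
  shows "gen_semitoric (Mh (1/2)) (\<lambda>L. L $ 4)
           (\<lambda>L. b * (L $ 1)^2 + b * (L $ 2)^2 + (L $ 3)^2)"
  unfolding gen_semitoric_def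
proof (intro conjI)
  show "\<forall>L\<in>Mh (1/2). Jf differentiable (at L) \<and> Gb b differentiable (at L) \<and>
        hamvf Jf differentiable (at L) \<and> hamvf (Gb b) differentiable (at L)"
    unfolding hamvfJ hamvfG using hdJ hdG hdXJ hdXG by (blast intro: differentiableI)
  show "\<forall>L\<in>Mh (1/2). pbr Jf (Gb b) L = 0" using pbr0 by blast
  show "Mh (1/2) \<subseteq> closure {L\<in>Mh (1/2). momentum_rank Jf (Gb b) L = 2}" using dense[OF assms] .
  show "generates_S1 (Mh (1/2)) Jf" by (rule genS1)
  show "\<forall>L\<in>Mh (1/2). momentum_rank Jf (Gb b) L = 0 \<longrightarrow>
          elliptic_elliptic Jf (Gb b) L \<or> focus_focus Jf (Gb b) L"
  proof (intro ballI impI)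
    fix L assume M: "L \<in> Mh (1/2)" and r: "momentum_rank Jf (Gb b) L = 0"
    from R2[OF M r] have z: "L$1 = 0" "L$2 = 0" "L$5 = 0" "L$6 = 0" and d: "L$3 = 0 \<or> L$4 = 0" by auto
    have n: "(L$3)^2 + (L$4)^2 = 1" using M z by (simp add: Mh_iff)
    from d show "elliptic_elliptic Jf (Gb b) L \<or> focus_focus Jf (Gb b) L"
    proof
      assume h: "L$3 = 0"
      then have "(L$4)^2 = 1" using n by simp
      then have "L$4 = 1 \<or> L$4 = -1" by (simp add: power2_eq_1_iff)
      moreover have "L = v6 0 0 0 (L$4) 0 0" using z h by (simp add: vec6_eq_iff)
      ultimately show ?thesis using EE_e4[OF assms] by blast
    next
      assume h: "L$4 = 0"
      then have "(L$3)^2 = 1" using n by simp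
      then have "L$3 = 1 \<or> L$3 = -1" by (simp add: power2_eq_1_iff)
      moreover have "L = v6 0 0 (L$3) 0 0 0" using z h by (simp add: vec6_eq_iff)
      ultimately show ?thesis using FF_e3[OF assms] by blast
    qed
  qed
  show "\<forall>L\<in>Mh (1/2). momentum_rank Jf (Gb b) L = 1 \<longrightarrow> transv_elliptic Jf (Gb b) L"
  proof (intro ballI impI)
    fix L assume M: "L \<in> Mh (1/2)" and r: "momentum_rank Jf (Gb b) L = 1"
    then have "momentum_rank Jf (Gb b) L < 2" by simp
    from R1[OF assms M this] show "transv_elliptic Jf (Gb b) L"
    proof (elim disjE conjE)
      assume "L$1 = 0" "L$2 = 0" "L$3 = 0"
      then show ?thesis using transv_S1[OF assms M] by blast
    next
      assume "L$3 = 0" "L$5 = 0" "L$6 = 0"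
      then show ?thesis using transv_S2[OF assms M] by blast
    next
      assume "L$1 = 0" "L$2 = 0" "L$4 = 0" "L$5 = 0" "L$6 = 0"
      then have "momentum_rank Jf (Gb b) L = 0" using rank0_e3[OF M] by blast
      then show ?thesis using r by simp
    qed
  qed
qed

end
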